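(* For all terms $s,t$ and $k\in\mathbb N$: $s\Downarrow_k t$ holds if and only if $s\succ^k t$ and $t$ is an abstraction.
   Context: Terms (de Bruijn): $s::=n\mid st\mid\lambda s$. Substitution $k^k_u=u$, $n^k_u=n$ ($n\ne k$), $(st)^k_u=(s^k_u)(t^k_u)$, $(\lambda s)^k_u=\lambda(s^{k+1}_u)$. Reduction: $(\lambda s)(\lambda t)\succ s^0_{\lambda t}$; $s\succ s'\Rightarrow st\succ s't$; $t\succ t'\Rightarrow(\lambda s)t\succ(\lambda s)t'$; $\succ^k$ is $k$-fold reduction. The big-step relation $s\Downarrow_k t$ is defined inductively by: $\lambda s\Downarrow_0\lambda s$; and if $s\Downarrow_{k_1}\lambda s'$, $t\Downarrow_{k_2}\lambda t'$ and $s'^0_{\lambda t'}\Downarrow_{k_3}u$, then $st\Downarrow_{k_1+k_2+1+k_3}u$. *)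

theory Defs
  imports Main
begin

datatype tm = Var nat | App "tm" "tm" | Lam "tm"

fun subst :: "tm \<Rightarrow> nat \<Rightarrow> tm \<Rightarrow> tm" where
  "subst (Var n) k u = (if n = k then u else Var n)"
| "subst (App s t) k u = App (subst s k u) (subst t k u)"
| "subst (Lam s) k u = Lam (subst s (Suc k) u)"

inductive step :: "tm \<Rightarrow> tm \<Rightarrow> bool" where
  stepBeta: "step (App (Lam s) (Lam t)) (subst s 0 (Lam t))"
| stepAppL: "step s s' \<Longrightarrow> step (App s t) (App s' t)"
| stepAppR: "step t t' \<Longrightarrow> step (App (Lam s) t) (App (Lam s) t')"

definition stepk :: "nat \<Rightarrow> tm \<Rightarrow> tm \<Rightarrow> bool" where
  "stepk k = step ^^ k"

inductive eval :: "tm \<Rightarrow> nat \<Rightarrow> tm \<Rightarrow> bool" where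
  evalLam: "eval (Lam s) 0 (Lam s)"
| evalApp: "eval s k1 (Lam s') \<Longrightarrow> eval t k2 (Lam t') \<Longrightarrow> eval (subst s' 0 (Lam t')) k3 u
            \<Longrightarrow> eval (App s t) (k1 + k2 + 1 + k3) u"

definition is_abs :: "tm \<Rightarrow> bool" where
  "is_abs t \<longleftrightarrow> (\<exists>s. t = Lam s)"

end

theory Submission
  imports Defs
begin

lemma stepk_appL: "(step ^^ k) s s' \<Longrightarrow> (step ^^ k) (App s t) (App s' t)"
proof (induction k arbitrary: s)
  case 0 then show ?case by simp
next
  case (Suc k)
  from Suc.prems obtain y where "step s y" "(step ^^ k) y s'" by (blast elim: relpowp_Suc_E2)
  then show ?case using Suc.IH by (blast intro: relpowp_Suc_I2 stepAppL)
qed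

lemma stepk_appR: "(step ^^ k) t t' \<Longrightarrow> (step ^^ k) (App (Lam s) t) (App (Lam s) t')"
proof (induction k arbitrary: t)
  case 0 then show ?case by simp
next
  case (Suc k)
  from Suc.prems obtain y where "step t y" "(step ^^ k) y t'" by (blast elim: relpowp_Suc_E2)
  then show ?case using Suc.IH by (blast intro: relpowp_Suc_I2 stepAppR)
qed

lemma stepk_trans: "(step ^^ m) a b \<Longrightarrow> (step ^^ n) b c \<Longrightarrow> (step ^^ (m + n)) a c"
  by (auto simp: relpowp_add)

lemma eval_fwd: "eval s k t \<Longrightarrow> (step ^^ k) s t \<and> is_abs t"
proof (induction rule: eval.induct)
  case (evalLam s) then show ?case by (simp add: is_abs_def)
next
  case (evalApp s k1 s' t k2 t' k3 u)
  have a: "(step ^^ k1) (App s t) (App (Lam s') t)" using evalApp stepk_appL by blast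
  have b: "(step ^^ k2) (App (Lam s') t) (App (Lam s') (Lam t'))" using evalApp stepk_appR by blast
  have c: "(step ^^ Suc k3) (App (Lam s') (Lam t')) u"
    using evalApp by (blast intro: relpowp_Suc_I2 stepBeta)
  have "(step ^^ (k1 + k2 + Suc k3)) (App s t) u" using stepk_trans[OF stepk_trans[OF a b] c] .
  then show ?case using evalApp by simp
qed

lemma step_eval: "step s s' \<Longrightarrow> eval s' k t \<Longrightarrow> eval s (Suc k) t"
proof (induction arbitrary: k t rule: step.induct)
  case (stepBeta a b)
  then show ?case using eval.evalApp[OF evalLam evalLam, of a b k] by simp
next
  case (stepAppL s s' t)
  from stepAppL.prems show ?case
  proof cases
    case (evalApp k1 s'' k2 t' k3)
    have "eval s (Suc k1) (Lam s'')" using stepAppL.IH evalApp by blast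
    from eval.evalApp[OF this evalApp(3) evalApp(4)] show ?thesis using evalApp by simp
  qed
next
  case (stepAppR a a' b)
  from stepAppR.prems show ?case
  proof cases
    case (evalApp k1 s'' k2 t'' k3)
    have "eval a (Suc k2) (Lam t'')" using stepAppR.IH evalApp by blast
    from eval.evalApp[OF evalApp(2) this evalApp(4)] show ?thesis using evalApp by simp
  qed
qed

lemma eval_bwd: "(step ^^ k) s t \<Longrightarrow> is_abs t \<Longrightarrow> eval s k t"
proof (induction k arbitrary: s)
  case 0 then show ?case by (auto simp: is_abs_def intro: evalLam)
next
  case (Suc k)
  from Suc.prems obtain y where "step s y" "(step ^^ k) y t" by (blast elim: relpowp_Suc_E2)
  then show ?case using Suc step_eval by blast
qed

theorem lemmaA3:
  fixes s t :: "tm" and k :: nat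
  shows "eval s k t \<longleftrightarrow> stepk k s t \<and> is_abs t"
  unfolding stepk_def using eval_fwd eval_bwd by blast

end
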